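(* Let $\theta_1,\theta_2\in\Theta_k$ and let $K\ge 4k$ be an integer. Then $\|\mathcal{M}_{\theta_1}-\mathcal{M}_{\theta_2}\|_{\mathcal{A}_K}=\|\mathcal{M}_{\theta_1}-\mathcal{M}_{\theta_2}\|_1$.
   Context: $\Theta_k=\{(w,\mu,\tau): w\in\mathbb{R}^k, w_i\ge0,\sum_i w_i=1,\ \mu\in\mathbb{R}^k,\ \tau\in\mathbb{R}_{>0}^k\}$; for $\theta=(w,\mu,\tau)\in\Theta_k$, $\mathcal{M}_\theta(x)=\sum_{i=1}^k w_i\frac{\tau_i}{\sqrt{2\pi}}e^{-\tau_i^2(x-\mu_i)^2/2}$. $\|g\|_1=\int|g|$. For $\mathfrak{I}_K$ the family of all sets of $K$ disjoint intervals in $\mathbb{R}$, $\|g\|_{\mathcal{A}_K}=\sup_{\mathcal{I}\in\mathfrak{I}_K}\sum_{I\in\mathcal{I}}\left|\int_I g(x)\,dx\right|$. *)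

theory Defs
  imports "HOL-Analysis.Analysis"
begin

text \<open>A parameter theta = (w, mu, tau) of a k-component Gaussian mixture; the
  components are indexed by i < k (values at i >= k are irrelevant).\<close>
type_synonym param = "(nat \<Rightarrow> real) \<times> (nat \<Rightarrow> real) \<times> (nat \<Rightarrow> real)"

definition Theta :: "nat \<Rightarrow> param set" where
  "Theta k = {(w, mu, tau). (\<forall>i<k. w i \<ge> 0) \<and> (\<Sum>i<k. w i) = 1 \<and> (\<forall>i<k. tau i > 0)}"

definition mixture :: "nat \<Rightarrow> param \<Rightarrow> real \<Rightarrow> real" where
  "mixture k \<theta> x = (case \<theta> of (w, mu, tau) \<Rightarrow>
     (\<Sum>i<k. w i * (tau i / sqrt (2 * pi)) * exp (- ((tau i)\<^sup>2 * (x - mu i)\<^sup>2) / 2)))"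

definition L1_norm :: "(real \<Rightarrow> real) \<Rightarrow> real" where
  "L1_norm g = (LINT x|lborel. \<bar>g x\<bar>)"

definition interval_families :: "nat \<Rightarrow> real set set set" where
  "interval_families K = {\<I>. finite \<I> \<and> card \<I> = K \<and> (\<forall>I\<in>\<I>. is_interval I)
      \<and> (\<forall>I\<in>\<I>. \<forall>J\<in>\<I>. I \<noteq> J \<longrightarrow> I \<inter> J = {})}"

definition AK_norm :: "nat \<Rightarrow> (real \<Rightarrow> real) \<Rightarrow> real" where
  "AK_norm K g = (SUP \<I>\<in>interval_families K. \<Sum>I\<in>\<I>. \<bar>LINT x:I|lborel. g x\<bar>)"

end

theory Submission
  imports Defs "HOL-Probability.Distributions"
begin


definition goodh :: "(real \<Rightarrow> real) \<Rightarrow> bool" where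
  "goodh h \<longleftrightarrow> h \<in> borel_measurable borel \<and> (\<forall>a. integrable lborel (\<lambda>y. \<bar>h y\<bar> * exp (a * \<bar>y\<bar>)))"

definition Lap :: "(real \<Rightarrow> real) \<Rightarrow> real \<Rightarrow> real" where
  "Lap h t = (\<integral>y. h y * exp (t * y) \<partial>lborel)"

lemma goodh_int:
  assumes "goodh h" shows "integrable lborel (\<lambda>y. h y * exp (t * y))"
proof (rule Bochner_Integration.integrable_bound)
  show "integrable lborel (\<lambda>y. \<bar>h y\<bar> * exp (\<bar>t\<bar> * \<bar>y\<bar>))" using assms goodh_def by auto
  show "(\<lambda>y. h y * exp (t * y)) \<in> borel_measurable lborel" using assms goodh_def by auto
  show "AE x in lborel. norm (h x * exp (t * x)) \<le> norm (\<bar>h x\<bar> * exp (\<bar>t\<bar> * \<bar>x\<bar>))"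
  proof (rule AE_I2)
    fix x
    have "t * x \<le> \<bar>t\<bar> * \<bar>x\<bar>" by (metis abs_ge_self abs_mult)
    then have "exp (t*x) \<le> exp (\<bar>t\<bar> * \<bar>x\<bar>)" by simp
    then show "norm (h x * exp (t * x)) \<le> norm (\<bar>h x\<bar> * exp (\<bar>t\<bar> * \<bar>x\<bar>))"
      by (simp add: abs_mult mult_left_mono)
  qed
qed

lemma abs_le_exp_abs: "\<bar>y::real\<bar> \<le> exp \<bar>y\<bar>"
  using exp_ge_add_one_self[of "\<bar>y\<bar>"] by linarith

lemma goodh_mult:
  assumes "goodh h" shows "goodh (\<lambda>y. (y - c) * h y)"
  unfolding goodh_def
proof safe
  show "(\<lambda>y. (y - c) * h y) \<in> borel_measurable borel" using assms goodh_def by auto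
  fix a
  show "integrable lborel (\<lambda>y. \<bar>(y - c) * h y\<bar> * exp (a * \<bar>y\<bar>))"
  proof (rule Bochner_Integration.integrable_bound)
    show "integrable lborel (\<lambda>y. (1 + \<bar>c\<bar>) * (\<bar>h y\<bar> * exp ((\<bar>a\<bar> + 1) * \<bar>y\<bar>)))"
      using assms goodh_def by auto
    show "(\<lambda>y. \<bar>(y - c) * h y\<bar> * exp (a * \<bar>y\<bar>)) \<in> borel_measurable lborel" using assms goodh_def by auto
    show "AE x in lborel. norm (\<bar>(x - c) * h x\<bar> * exp (a * \<bar>x\<bar>)) \<le> norm ((1 + \<bar>c\<bar>) * (\<bar>h x\<bar> * exp ((\<bar>a\<bar> + 1) * \<bar>x\<bar>)))"
    proof (rule AE_I2)
      fix x
      have e1: "exp (a * \<bar>x\<bar>) \<le> exp (\<bar>a\<bar> * \<bar>x\<bar>)" by (simp add: mult_right_mono)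
      have e2: "\<bar>x - c\<bar> \<le> (1 + \<bar>c\<bar>) * exp \<bar>x\<bar>"
      proof -
        have "\<bar>x - c\<bar> \<le> \<bar>x\<bar> + \<bar>c\<bar>" by linarith
        also have "\<dots> \<le> exp \<bar>x\<bar> + \<bar>c\<bar> * exp \<bar>x\<bar>"
          using abs_le_exp_abs[of x] mult_left_mono[of 1 "exp \<bar>x\<bar>" "\<bar>c\<bar>"] by auto
        finally show ?thesis by (simp add: algebra_simps)
      qed
      have "\<bar>(x - c) * h x\<bar> * exp (a * \<bar>x\<bar>) = \<bar>x - c\<bar> * (\<bar>h x\<bar> * exp (a * \<bar>x\<bar>))"
        by (simp add: abs_mult)
      also have "\<dots> \<le> ((1 + \<bar>c\<bar>) * exp \<bar>x\<bar>) * (\<bar>h x\<bar> * exp (\<bar>a\<bar> * \<bar>x\<bar>))"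
        by (intro mult_mono e2 mult_left_mono e1) auto
      also have "\<dots> = (1 + \<bar>c\<bar>) * (\<bar>h x\<bar> * exp ((\<bar>a\<bar> + 1) * \<bar>x\<bar>))"
        by (simp add: algebra_simps exp_add[symmetric])
      finally show "norm (\<bar>(x - c) * h x\<bar> * exp (a * \<bar>x\<bar>)) \<le> norm ((1 + \<bar>c\<bar>) * (\<bar>h x\<bar> * exp ((\<bar>a\<bar> + 1) * \<bar>x\<bar>)))"
        by simp
    qed
  qed
qed

lemma exp_sub_one_bound: "\<bar>exp (u::real) - 1\<bar> \<le> \<bar>u\<bar> * exp \<bar>u\<bar>"
proof (cases "u \<ge> 0")
  case True
  have "1 - u \<le> exp (-u)" using exp_ge_add_one_self[of "-u"] by simp
  then have "exp u * (1 - u) \<le> exp u * exp (-u)" by (intro mult_left_mono) auto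
  then have "exp u * (1 - u) \<le> 1" by (simp add: exp_minus field_simps)
  then show ?thesis using True by (simp add: algebra_simps)
next
  case False
  have a: "1 + u \<le> exp u" by simp
  have b: "exp u \<le> 1" using False by simp
  have c: "\<bar>u\<bar> \<le> \<bar>u\<bar> * exp \<bar>u\<bar>" using mult_left_mono[of 1 "exp \<bar>u\<bar>" "\<bar>u\<bar>"] by simp
  have d: "\<bar>exp u - 1\<bar> = 1 - exp u" using b by simp
  have e: "\<bar>u\<bar> = - u" using False by simp
  show ?thesis using a c d e by linarith
qed

lemma exp_quot_bound:
  fixes d y :: real
  assumes "\<bar>d\<bar> \<le> 1" "d \<noteq> 0"
  shows "\<bar>(exp (d * y) - 1) / d\<bar> \<le> exp (2 * \<bar>y\<bar>)"
proof -
  have "\<bar>exp (d * y) - 1\<bar> \<le> \<bar>d * y\<bar> * exp \<bar>d * y\<bar>" using exp_sub_one_bound[of "d * y"] .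
  also have "\<dots> \<le> \<bar>d\<bar> * (exp \<bar>y\<bar> * exp \<bar>y\<bar>)"
  proof -
    have "\<bar>d * y\<bar> \<le> \<bar>y\<bar>" using assms by (simp add: abs_mult mult_left_le_one_le)
    then have "exp \<bar>d * y\<bar> \<le> exp \<bar>y\<bar>" by simp
    moreover have "\<bar>y\<bar> \<le> exp \<bar>y\<bar>" by (rule abs_le_exp_abs)
    ultimately have X: "\<bar>y\<bar> * exp \<bar>d * y\<bar> \<le> exp \<bar>y\<bar> * exp \<bar>y\<bar>"
      by (intro mult_mono) auto
    have "\<bar>d * y\<bar> * exp \<bar>d * y\<bar> = \<bar>d\<bar> * (\<bar>y\<bar> * exp \<bar>d * y\<bar>)"
      by (simp only: abs_mult mult.assoc)
    then show ?thesis using mult_left_mono[OF X, of "\<bar>d\<bar>"] by linarith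
  qed
  also have "exp \<bar>y\<bar> * exp \<bar>y\<bar> = exp (2 * \<bar>y\<bar>)"
    by (simp only: mult_2 exp_add)
  finally have F: "\<bar>exp (d * y) - 1\<bar> \<le> \<bar>d\<bar> * exp (2 * \<bar>y\<bar>)" .
  have "\<bar>d\<bar> > 0" using assms by simp
  then show ?thesis using F by (simp only: abs_divide pos_divide_le_eq mult.commute)
qed

lemma Lap_deriv:
  assumes "goodh h"
  shows "(Lap h has_real_derivative Lap (\<lambda>y. y * h y) t) (at t)"
  unfolding DERIV_def
proof -
  have hm: "h \<in> borel_measurable borel" using assms goodh_def by auto
  define s where "s = (\<lambda>d y. h y * exp (t * y) * ((exp (d * y) - 1) / d))"
  have quot: "(Lap h (t + d) - Lap h t) / d = (\<integral>y. s d y \<partial>lborel)" for d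
  proof -
    have "Lap h (t + d) - Lap h t = (\<integral>y. h y * exp ((t + d) * y) - h y * exp (t * y) \<partial>lborel)"
      unfolding Lap_def by (rule Bochner_Integration.integral_diff[OF goodh_int[OF assms] goodh_int[OF assms], symmetric])
    also have "\<dots> = (\<integral>y. h y * exp (t * y) * (exp (d * y) - 1) \<partial>lborel)"
      by (intro Bochner_Integration.integral_cong) (auto simp: algebra_simps exp_add)
    finally show ?thesis unfolding s_def by (simp only: times_divide_eq_right integral_divide_zero)
  qed
  have "((\<lambda>d. (Lap h (t + d) - Lap h t) / d) \<longlongrightarrow> Lap (\<lambda>y. y * h y) t) (at 0 within UNIV)"
    unfolding tendsto_at_iff_sequentially comp_def
  proof safe
    fix X :: "nat \<Rightarrow> real" assume X0: "\<forall>i. X i \<in> UNIV - {0}" and X: "X \<longlonglongrightarrow> 0"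
    obtain N where "\<forall>n\<ge>N. dist (X n) 0 < 1"
      using X[unfolded LIMSEQ_def, rule_format, of 1] by auto
    then have N: "\<And>n. n \<ge> N \<Longrightarrow> \<bar>X n\<bar> \<le> 1" by (force simp: dist_real_def)
    have "(\<lambda>n. \<integral>y. s (X (n + N)) y \<partial>lborel) \<longlonglongrightarrow> (\<integral>y. y * h y * exp (t * y) \<partial>lborel)"
    proof (rule integral_dominated_convergence[where w="\<lambda>y. \<bar>h y\<bar> * exp ((\<bar>t\<bar> + 2) * \<bar>y\<bar>)"])
      show "(\<lambda>y. y * h y * exp (t * y)) \<in> borel_measurable lborel" using hm by auto
      show "\<And>i. s (X (i + N)) \<in> borel_measurable lborel" using hm unfolding s_def by auto
      show "integrable lborel (\<lambda>y. \<bar>h y\<bar> * exp ((\<bar>t\<bar> + 2) * \<bar>y\<bar>))" using assms goodh_def by auto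
      show "AE y in lborel. (\<lambda>i. s (X (i + N)) y) \<longlonglongrightarrow> y * h y * exp (t * y)"
      proof (rule AE_I2)
        fix y :: real
        have "((\<lambda>d. exp (d * y)) has_real_derivative exp (0 * y) * y) (at 0)"
          by (auto intro!: derivative_eq_intros)
        then have "((\<lambda>d. (exp ((0 + d) * y) - exp (0 * y)) / d) \<longlongrightarrow> y) (at 0 within UNIV)"
          unfolding DERIV_def by simp
        then have "(\<lambda>n. (exp (X (n + N) * y) - 1) / X (n + N)) \<longlonglongrightarrow> y"
          unfolding tendsto_at_iff_sequentially comp_def
          using X0 LIMSEQ_ignore_initial_segment[OF X, of N] by simp
        then have "(\<lambda>n. h y * exp (t * y) * ((exp (X (n + N) * y) - 1) / X (n + N))) \<longlonglongrightarrow> h y * exp (t * y) * y"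
          by (intro tendsto_intros)
        then show "(\<lambda>i. s (X (i + N)) y) \<longlonglongrightarrow> y * h y * exp (t * y)"
          unfolding s_def by (simp add: algebra_simps)
      qed
      show "AE y in lborel. norm (s (X (i + N)) y) \<le> \<bar>h y\<bar> * exp ((\<bar>t\<bar> + 2) * \<bar>y\<bar>)" for i
      proof (rule AE_I2)
        fix y :: real
        have b1: "\<bar>(exp (X (i + N) * y) - 1) / X (i + N)\<bar> \<le> exp (2 * \<bar>y\<bar>)"
          using N[of "i + N"] X0 by (intro exp_quot_bound) auto
        have b2: "exp (t * y) \<le> exp (\<bar>t\<bar> * \<bar>y\<bar>)"
        proof -
          have "t * y \<le> \<bar>t\<bar> * \<bar>y\<bar>" by (metis abs_ge_self abs_mult)
          then show ?thesis by simp
        qed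
        have "norm (s (X (i + N)) y) = \<bar>h y\<bar> * (exp (t * y) * \<bar>(exp (X (i + N) * y) - 1) / X (i + N)\<bar>)"
          unfolding s_def by (simp add: abs_mult)
        also have "\<dots> \<le> \<bar>h y\<bar> * (exp (\<bar>t\<bar> * \<bar>y\<bar>) * exp (2 * \<bar>y\<bar>))"
          by (intro mult_left_mono mult_mono b1 b2) auto
        also have "\<dots> = \<bar>h y\<bar> * exp ((\<bar>t\<bar> + 2) * \<bar>y\<bar>)"
          by (simp add: exp_add[symmetric] algebra_simps)
        finally show "norm (s (X (i + N)) y) \<le> \<bar>h y\<bar> * exp ((\<bar>t\<bar> + 2) * \<bar>y\<bar>)" .
      qed
    qed
    then have L: "(\<lambda>n. \<integral>y. s (X n) y \<partial>lborel) \<longlonglongrightarrow> (\<integral>y. y * h y * exp (t * y) \<partial>lborel)"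
      by (rule LIMSEQ_offset)
    then show "(\<lambda>n. (Lap h (t + X n) - Lap h t) / X n) \<longlonglongrightarrow> Lap (\<lambda>y. y * h y) t"
      unfolding quot using L by (simp only: Lap_def)
  qed
  then show "((\<lambda>d. (Lap h (t + d) - Lap h t) / d) \<longlongrightarrow> Lap (\<lambda>y. y * h y) t) (at 0)" by simp
qed



lemma rolle_zero:
  fixes M M' :: "real \<Rightarrow> real"
  assumes D: "\<And>t. (M has_real_derivative M' t) (at t)"
    and ab: "a < b" "M a = 0" "M b = 0"
  shows "\<exists>z. a < z \<and> z < b \<and> M' z = 0"
proof -
  have "continuous_on {a..b} M"
    using D by (meson DERIV_continuous continuous_at_imp_continuous_on)
  moreover have "\<And>x. M differentiable (at x)" using D real_differentiable_def by blast
  ultimately obtain z where z: "a < z" "z < b" "DERIV M z :> 0"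
    using Rolle[of a b M] ab by auto
  then have "M' z = 0" using DERIV_unique[OF D[of z]] by auto
  then show ?thesis using z by auto
qed

lemma rolle_card:
  fixes M M' :: "real \<Rightarrow> real"
  assumes D: "\<And>t. (M has_real_derivative M' t) (at t)"
    and fZ: "finite {t. M' t = 0}"
    and S: "finite S" "S \<subseteq> {t. M t = 0}"
  shows "card S \<le> Suc (card {t. M' t = 0})"
proof (cases "S = {}")
  case True then show ?thesis by simp
next
  case False
  define xs where "xs = sorted_list_of_set S"
  have xs: "set xs = S" "length xs = card S" "sorted_wrt (<) xs"
    using S by (auto simp: xs_def strict_sorted_list_of_set)
  obtain N where N: "card S = Suc N" using False S by (metis card_0_eq not0_implies_Suc)
  have ex: "\<exists>z. xs ! i < z \<and> z < xs ! Suc i \<and> M' z = 0" if "i < N" for i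
  proof (rule rolle_zero[OF D])
    show "xs ! i < xs ! Suc i" using xs that N by (intro sorted_wrt_nth_less[OF xs(3)]) auto
    have "i < length xs" "Suc i < length xs" using xs that N by auto
    then have "xs ! i \<in> S" "xs ! Suc i \<in> S" using xs(1) nth_mem by blast+
    then show "M (xs ! i) = 0" "M (xs ! Suc i) = 0" using S by auto
  qed
  define \<xi> where "\<xi> = (\<lambda>i. SOME z. xs ! i < z \<and> z < xs ! Suc i \<and> M' z = 0)"
  have \<xi>: "xs ! i < \<xi> i \<and> \<xi> i < xs ! Suc i \<and> M' (\<xi> i) = 0" if "i < N" for i
    unfolding \<xi>_def using someI_ex[OF ex[OF that]] .
  have mono: "\<xi> i < \<xi> j" if "i < j" "j < N" for i j
  proof -
    have "xs ! Suc i \<le> xs ! j"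
    proof (cases "Suc i = j")
      case True then show ?thesis by simp
    next
      case False
      then have "Suc i < j" using that by simp
      then show ?thesis using xs that N by (intro less_imp_le sorted_wrt_nth_less[OF xs(3)]) auto
    qed
    then show ?thesis using \<xi>[of i] \<xi>[of j] that by force
  qed
  have inj: "inj_on \<xi> {..<N}"
    by (rule inj_onI) (metis lessThan_iff linorder_neqE_nat mono order_less_irrefl)
  have "\<xi> ` {..<N} \<subseteq> {t. M' t = 0}" using \<xi> by auto
  then have "card (\<xi> ` {..<N}) \<le> card {t. M' t = 0}" using fZ by (rule card_mono[rotated])
  then show ?thesis using card_image[OF inj] N by simp
qed

lemma rolle_count:
  fixes M M' :: "real \<Rightarrow> real"
  assumes D: "\<And>t. (M has_real_derivative M' t) (at t)"
    and H: "(\<forall>t. M' t = 0) \<or> (finite {t. M' t = 0} \<and> card {t. M' t = 0} \<le> r)"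
  shows "(\<forall>t. M t = 0) \<or> (finite {t. M t = 0} \<and> card {t. M t = 0} \<le> Suc r)"
proof (cases "\<forall>t. M' t = 0")
  case True
  then have c: "M x = M y" for x y using D by (metis DERIV_isconst_all)
  show ?thesis
  proof (cases "\<exists>t. M t = 0")
    case True then show ?thesis using c by metis
  next
    case False then have "{t. M t = 0} = {}" by auto
    then show ?thesis by simp
  qed
next
  case False
  then have fZ: "finite {t. M' t = 0}" and cZ: "card {t. M' t = 0} \<le> r" using H by auto
  have fin: "finite {t. M t = 0}"
  proof (rule ccontr)
    assume "infinite {t. M t = 0}"
    then obtain S where "finite S" "card S = Suc (Suc r)" "S \<subseteq> {t. M t = 0}"
      using infinite_arbitrarily_large by blast
    then show False using rolle_card[OF D fZ, of S] cZ by simp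
  qed
  then show ?thesis using rolle_card[OF D fZ fin order_refl] cZ by simp
qed



definition zb :: "(real \<Rightarrow> real) \<Rightarrow> nat \<Rightarrow> bool" where
  "zb F r \<longleftrightarrow> (\<forall>t. F t = 0) \<or> (finite {t. F t = 0} \<and> card {t. F t = 0} \<le> r)"

lemma zb_mono: "zb F r \<Longrightarrow> r \<le> s \<Longrightarrow> zb F s"
  unfolding zb_def by auto

lemma zb_cong: "zb F r \<Longrightarrow> (\<And>t. G t = F t) \<Longrightarrow> zb G r"
  unfolding zb_def by auto

lemma rolle_step:
  fixes L L' :: "real \<Rightarrow> real"
  assumes D: "\<And>t. (L has_real_derivative L' t) (at t)"
    and H: "zb (\<lambda>t. L' t - yy * L t) r"
  shows "zb L (Suc r)"
proof -
  define M where "M t = exp (- (t * yy)) * L t" for t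
  have DM: "(M has_real_derivative exp (- (t * yy)) * (L' t - yy * L t)) (at t)" for t
    unfolding M_def
    by (rule derivative_eq_intros D refl | simp)+ (simp add: algebra_simps)
  have "zb (\<lambda>t. exp (- (t * yy)) * (L' t - yy * L t)) r"
  proof -
    have "{t. exp (- (t * yy)) * (L' t - yy * L t) = 0} = {t. L' t - yy * L t = 0}" by auto
    then show ?thesis using H unfolding zb_def by auto
  qed
  then have "zb M (Suc r)"
    using rolle_count[OF DM, of r] unfolding zb_def by blast
  moreover have "{t. M t = 0} = {t. L t = 0}" unfolding M_def by auto
  ultimately show ?thesis unfolding zb_def M_def by auto
qed

lemma expsum_zeros:
  assumes "finite D"
  shows "zb (\<lambda>t. \<Sum>z\<in>D. c z * exp (t * z)) (card D - 1)"
  using assms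
proof (induction "card D" arbitrary: D c rule: less_induct)
  case less
  show ?case
  proof (cases "D = {}")
    case True then show ?thesis unfolding zb_def by simp
  next
    case False
    then obtain z0 where z0: "z0 \<in> D" by auto
    define c' where "c' z = c z * (z - z0)" for z
    have cpos: "card D > 0" using less(2) z0 card_gt_0_iff by blast
    have IH: "zb (\<lambda>t. \<Sum>z\<in>D - {z0}. c' z * exp (t * z)) (card (D - {z0}) - 1)"
      using less z0 cpos by (intro less(1)) auto
    have D: "((\<lambda>t. \<Sum>z\<in>D. c z * exp (t * z)) has_real_derivative (\<Sum>z\<in>D. c z * (exp (t * z) * z))) (at t)" for t
      by (rule derivative_eq_intros refl | simp)+ (simp add: algebra_simps)
    have eq: "(\<Sum>z\<in>D. c z * (exp (t * z) * z)) - z0 * (\<Sum>z\<in>D. c z * exp (t * z))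
        = (\<Sum>z\<in>D - {z0}. c' z * exp (t * z))" for t
    proof -
      have "(\<Sum>z\<in>D. c z * (exp (t * z) * z)) - z0 * (\<Sum>z\<in>D. c z * exp (t * z))
          = (\<Sum>z\<in>D. c' z * exp (t * z))"
        by (simp add: c'_def sum_distrib_left sum_subtractf[symmetric] algebra_simps)
      also have "\<dots> = (\<Sum>z\<in>D - {z0}. c' z * exp (t * z))"
        using less(2) z0 by (subst sum.remove[of _ z0]) (auto simp: c'_def)
      finally show ?thesis .
    qed
    have "zb (\<lambda>t. \<Sum>z\<in>D. c z * exp (t * z)) (Suc (card (D - {z0}) - 1))"
      by (rule rolle_step[OF D]) (rule zb_cong[OF IH eq])
    moreover have "Suc (card (D - {z0}) - 1) \<le> card D - 1 \<or> card D = 1"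
      using z0 less(2) cpos by (simp add: card_Diff_singleton, arith)
    moreover have "card D = 1 \<Longrightarrow> zb (\<lambda>t. \<Sum>z\<in>D. c z * exp (t * z)) (card D - 1)"
    proof -
      assume "card D = 1"
      then have "D = {z0}" using z0 by (metis card_1_singletonE singletonD)
      then show ?thesis unfolding zb_def by auto
    qed
    ultimately show ?thesis using zb_mono by blast
  qed
qed



lemma goodh_neg: "goodh h \<Longrightarrow> goodh (\<lambda>y. - h y)"
  unfolding goodh_def by auto

lemma Lap_neg: "Lap (\<lambda>y. - h y) t = - Lap h t"
  unfolding Lap_def by simp

lemma Lap_lin:
  assumes "goodh h"
  shows "Lap (\<lambda>y. y * h y) t - y1 * Lap h t = Lap (\<lambda>y. (y - y1) * h y) t"
proof -
  have g0: "goodh (\<lambda>y. y * h y)" using goodh_mult[OF assms, of 0] by simp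
  have "Lap (\<lambda>y. y * h y) t - y1 * Lap h t
      = (\<integral>y. y * h y * exp (t * y) \<partial>lborel) - (\<integral>y. y1 * (h y * exp (t * y)) \<partial>lborel)"
    unfolding Lap_def by simp
  also have "\<dots> = (\<integral>y. y * h y * exp (t * y) - y1 * (h y * exp (t * y)) \<partial>lborel)"
    by (rule Bochner_Integration.integral_diff[symmetric])
       (auto intro: goodh_int[OF g0] goodh_int[OF assms])
  also have "\<dots> = Lap (\<lambda>y. (y - y1) * h y) t"
    unfolding Lap_def by (intro Bochner_Integration.integral_cong) (auto simp: algebra_simps)
  finally show ?thesis .
qed

lemma base_nonneg:
  assumes gh: "goodh h" and nn: "\<And>y. 0 \<le> h y" and z: "Lap h t0 = 0"
  shows "Lap h t = 0"
proof -
  have hm: "h \<in> borel_measurable borel" using gh goodh_def by auto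
  have "AE y in lborel. h y * exp (t0 * y) = 0"
    using z integral_nonneg_eq_0_iff_AE[OF goodh_int[OF gh, of t0]] nn
    unfolding Lap_def by auto
  then have AE: "AE y in lborel. h y * exp (t * y) = 0"
    by eventually_elim auto
  show ?thesis
    unfolding Lap_def by (rule integral_eq_zero_AE[OF AE])
qed

lemma sign_const:
  assumes "\<And>x y. 0 \<le> h x * (h y :: real)"
  shows "(\<forall>x. 0 \<le> h x) \<or> (\<forall>x. h x \<le> 0)"
proof (rule ccontr)
  assume "\<not> ?thesis"
  then obtain a b where "h a < 0" "0 < h b" by (auto simp: not_le)
  then have "h a * h b < 0" by (simp add: mult_neg_pos)
  then show False using assms[of a b] by simp
qed

lemma sign_aux:
  fixes a b c d :: real
  assumes "0 \<le> a * b" "0 \<le> d * c" "b * c < 0"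
  shows "a * d \<le> 0"
proof -
  have "0 \<le> (a * b) * (d * c)" using assms by simp
  also have "(a * b) * (d * c) = (a * d) * (b * c)" by (simp add: algebra_simps)
  finally have "0 \<le> (a * d) * (b * c)" .
  show ?thesis
  proof (rule ccontr)
    assume "\<not> a * d \<le> 0"
    then have "0 < a * d" by simp
    then have "(a * d) * (b * c) < 0" using assms(3) by (rule mult_pos_neg)
    then show False using \<open>0 \<le> (a * d) * (b * c)\<close> by simp
  qed
qed

lemma LT:
  assumes "finite C" "D \<subseteq> C" "goodh h"
    "\<And>x y. x < y \<Longrightarrow> (\<forall>z\<in>C. \<not> (x < z \<and> z < y)) \<Longrightarrow> 0 \<le> h x * h y"
  shows "zb (\<lambda>t. Lap h t + (\<Sum>z\<in>D. c z * exp (t * z))) (card C + card D)"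
  using assms
proof (induction "card C + card D" arbitrary: C D h c rule: less_induct)
  case less
  note fC = less(2) and DC = less(3) and gh = less(4) and V = less(5)
  have fD: "finite D" using fC DC finite_subset by blast
  show ?case
  proof (cases "C = {}")
    case True
    then have D0: "D = {}" using DC by auto
    have all: "0 \<le> h x * h y" for x y
    proof (cases x y rule: linorder_cases)
      case less then show ?thesis using V True by auto
    next
      case equal then show ?thesis by simp
    next
      case greater then show ?thesis using V[of y x] True by (auto simp: mult.commute)
    qed
    have main: "Lap h t = 0" if "Lap h t0 = 0" for t t0
    proof -
      from sign_const[of h, OF all] show ?thesis
      proof
        assume "\<forall>x. 0 \<le> h x" then show ?thesis using base_nonneg[OF gh _ that] by auto
      next
        assume "\<forall>x. h x \<le> 0"
        then have "Lap (\<lambda>y. - h y) t = 0"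
          using base_nonneg[OF goodh_neg[OF gh], of t0 t] that Lap_neg[of h] by auto
        then show ?thesis using Lap_neg[of h t] by simp
      qed
    qed
    show ?thesis
    proof (cases "\<exists>t0. Lap h t0 = 0")
      case True then show ?thesis using main D0 unfolding zb_def by auto
    next
      case False then show ?thesis using D0 unfolding zb_def by auto
    qed
  next
    case False
    define y1 where "y1 = Min C"
    have y1C: "y1 \<in> C" using False fC y1_def by auto
    have y1min: "\<And>z. z \<in> C \<Longrightarrow> y1 \<le> z" using fC y1_def by auto
    define h' where "h' = (\<lambda>y. (y - y1) * h y)"
    define c' where "c' = (\<lambda>z. c z * (z - y1))"
    have gh': "goodh h'" unfolding h'_def by (rule goodh_mult[OF gh])
    have ds: "((\<lambda>t. \<Sum>z\<in>D. c z * exp (t * z)) has_real_derivative (\<Sum>z\<in>D. c z * (exp (t * z) * z))) (at t)" for t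
      by (rule derivative_eq_intros refl | simp)+ (simp add: algebra_simps)
    have deriv: "((\<lambda>t. Lap h t + (\<Sum>z\<in>D. c z * exp (t * z))) has_real_derivative
        (Lap (\<lambda>y. y * h y) t + (\<Sum>z\<in>D. c z * (exp (t * z) * z)))) (at t)" for t
      using DERIV_add[OF Lap_deriv[OF gh] ds] .
    have eqL: "(Lap (\<lambda>y. y * h y) t + (\<Sum>z\<in>D. c z * (exp (t * z) * z)))
        - y1 * (Lap h t + (\<Sum>z\<in>D. c z * exp (t * z)))
        = Lap h' t + (\<Sum>z\<in>D. c' z * exp (t * z))" for t
    proof -
      have "(\<Sum>z\<in>D. c z * (exp (t * z) * z)) - y1 * (\<Sum>z\<in>D. c z * exp (t * z))
          = (\<Sum>z\<in>D. c' z * exp (t * z))"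
        by (simp add: c'_def sum_distrib_left sum_subtractf[symmetric] algebra_simps)
      moreover have "Lap (\<lambda>y. y * h y) t - y1 * Lap h t = Lap h' t"
        unfolding h'_def by (rule Lap_lin[OF gh])
      ultimately show ?thesis by (simp add: algebra_simps)
    qed
    show ?thesis
    proof (cases "y1 \<in> D")
      case True
      have eqS: "(\<Sum>z\<in>D. c' z * exp (t * z)) = (\<Sum>z\<in>D - {y1}. c' z * exp (t * z))" for t
        using fD True by (subst sum.remove[of _ y1]) (auto simp: c'_def)
      have V': "0 \<le> h' x * h' y" if "x < y" "\<forall>z\<in>C. \<not> (x < z \<and> z < y)" for x y
      proof -
        have "\<not> (x < y1 \<and> y1 < y)" using that y1C by auto
        then have "0 \<le> (x - y1) * (y - y1)" using \<open>x < y\<close>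
          by (cases "y1 \<le> x") (auto intro: mult_nonneg_nonneg mult_nonpos_nonpos)
        moreover have "0 \<le> h x * h y" using V that by auto
        ultimately have "0 \<le> ((x - y1) * (y - y1)) * (h x * h y)" by simp
        then show ?thesis unfolding h'_def by (simp add: algebra_simps)
      qed
      have cD: "card (D - {y1}) < card D" by (rule card_Diff1_less[OF fD True])
      have IH: "zb (\<lambda>t. Lap h' t + (\<Sum>z\<in>D - {y1}. c' z * exp (t * z))) (card C + card (D - {y1}))"
        using cD fC DC gh' V' by (intro less(1)) auto
      have "zb (\<lambda>t. Lap h t + (\<Sum>z\<in>D. c z * exp (t * z))) (Suc (card C + card (D - {y1})))"
        by (rule rolle_step[OF deriv, where yy=y1]) (rule zb_cong[OF IH], simp add: eqL eqS)
      moreover have "Suc (card C + card (D - {y1})) = card C + card D"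
        using True fD cD by (simp add: card_Diff_singleton)
      ultimately show ?thesis by simp
    next
      case False
      have DC': "D \<subseteq> C - {y1}" using DC False by auto
      have cC: "card (C - {y1}) < card C" by (rule card_Diff1_less[OF fC y1C])
      show ?thesis
      proof (cases "\<forall>x y. x < y \<longrightarrow> (\<forall>z\<in>C - {y1}. \<not> (x < z \<and> z < y)) \<longrightarrow> 0 \<le> h x * h y")
        case True
        have "zb (\<lambda>t. Lap h t + (\<Sum>z\<in>D. c z * exp (t * z))) (card (C - {y1}) + card D)"
          using cC fC DC' gh True by (intro less(1)) auto
        then show ?thesis by (rule zb_mono) (use cC in simp)
      next
        case NC: False
        then obtain x0 y0 where xy0: "x0 < y0" "\<forall>z\<in>C - {y1}. \<not> (x0 < z \<and> z < y0)"
          "h x0 * h y0 < 0" by (auto simp: not_le)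
        have y1in: "x0 < y1 \<and> y1 < y0"
        proof (rule ccontr)
          assume "\<not> (x0 < y1 \<and> y1 < y0)"
          then have "\<forall>z\<in>C. \<not> (x0 < z \<and> z < y0)" using xy0 by auto
          then show False using V[OF xy0(1)] xy0(3) by simp
        qed
        have V': "0 \<le> h' u * h' v" if uv: "u < v" "\<forall>z\<in>C - {y1}. \<not> (u < z \<and> z < v)" for u v
        proof (cases "u < y1 \<and> y1 < v")
          case False
          then have "0 \<le> (u - y1) * (v - y1)" using \<open>u < v\<close>
            by (cases "y1 \<le> u") (auto intro: mult_nonneg_nonneg mult_nonpos_nonpos)
          moreover have "0 \<le> h u * h v" using V uv False by auto
          ultimately have "0 \<le> ((u - y1) * (v - y1)) * (h u * h v)" by simp
          then show ?thesis unfolding h'_def by (simp add: algebra_simps)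
        next
          case True
          have left: "0 \<le> h p * h q" if "p < y1" "q < y1" for p q
          proof (cases p q rule: linorder_cases)
            case less
            have "\<forall>z\<in>C. \<not> (p < z \<and> z < q)" using y1min that by force
            then show ?thesis using V[OF less] by simp
          next
            case equal then show ?thesis by simp
          next
            case greater
            have "\<forall>z\<in>C. \<not> (q < z \<and> z < p)" using y1min that by force
            then show ?thesis using V[OF greater] by (simp add: mult.commute)
          qed
          have A: "0 \<le> h u * h x0" using left True y1in by auto
          have B: "0 \<le> h v * h y0"
          proof (cases v y0 rule: linorder_cases)
            case less
            have "\<forall>z\<in>C. \<not> (v < z \<and> z < y0)"
            proof safe
              fix z assume z: "z \<in> C" "v < z" "z < y0"
              then have "z \<in> C - {y1}" using True by auto
              then show False using xy0(2) z y1in True by force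
            qed
            then show ?thesis using V[OF less] by simp
          next
            case equal then show ?thesis by simp
          next
            case greater
            have "\<forall>z\<in>C. \<not> (y0 < z \<and> z < v)"
            proof safe
              fix z assume z: "z \<in> C" "y0 < z" "z < v"
              then have "z \<in> C - {y1}" using y1in by auto
              then show False using uv(2) z y1in True by force
            qed
            then show ?thesis using V[OF greater] by (simp add: mult.commute)
          qed
          have "h u * h v \<le> 0" using sign_aux[OF A B xy0(3)] .
          moreover have "(u - y1) * (v - y1) < 0" using True by (simp add: mult_neg_pos)
          ultimately have "0 \<le> ((u - y1) * (v - y1)) * (h u * h v)"
            by (simp add: mult_nonpos_nonpos)
          then show ?thesis unfolding h'_def by (simp add: algebra_simps)
        qed
        have IH: "zb (\<lambda>t. Lap h' t + (\<Sum>z\<in>D. c' z * exp (t * z))) (card (C - {y1}) + card D)"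
          using cC fC DC' gh' V' by (intro less(1)) auto
        have "zb (\<lambda>t. Lap h t + (\<Sum>z\<in>D. c z * exp (t * z))) (Suc (card (C - {y1}) + card D))"
          by (rule rolle_step[OF deriv, where yy=y1]) (rule zb_cong[OF IH], simp add: eqL)
        moreover have "Suc (card (C - {y1}) + card D) = card C + card D"
          using y1C fC cC by (simp add: card_Diff_singleton)
        ultimately show ?thesis by simp
      qed
    qed
  qed
qed



lemma gauss_hbi:
  fixes \<gamma> e :: real
  assumes g: "0 < \<gamma>"
  shows "has_bochner_integral lborel (\<lambda>y. exp (- \<gamma> * y\<^sup>2 + e * y)) (sqrt (pi / \<gamma>) * exp (e\<^sup>2 / (4 * \<gamma>)))"
proof -
  define \<mu> where "\<mu> = e / (2 * \<gamma>)"
  define \<sigma> where "\<sigma> = sqrt (1 / (2 * \<gamma>))"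
  have spos: "0 < \<sigma>" unfolding \<sigma>_def using g by simp
  have s2: "\<sigma>\<^sup>2 = 1 / (2 * \<gamma>)" unfolding \<sigma>_def using g by simp
  have nd: "has_bochner_integral lborel (normal_density \<mu> \<sigma>) 1"
    unfolding has_bochner_integral_iff using integrable_normal_density[of \<sigma> \<mu>] integral_normal_density[of \<sigma> \<mu>] spos by blast
  have "has_bochner_integral lborel (\<lambda>y. (sqrt (pi / \<gamma>) * exp (e\<^sup>2 / (4 * \<gamma>))) * normal_density \<mu> \<sigma> y)
      ((sqrt (pi / \<gamma>) * exp (e\<^sup>2 / (4 * \<gamma>))) * 1)"
    using nd by (intro has_bochner_integral_mult_right)
  moreover have "(sqrt (pi / \<gamma>) * exp (e\<^sup>2 / (4 * \<gamma>))) * normal_density \<mu> \<sigma> y = exp (- \<gamma> * y\<^sup>2 + e * y)" for y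
  proof -
    have sq: "sqrt (2 * pi * \<sigma>\<^sup>2) = sqrt (pi / \<gamma>)" using s2 by simp
    have sp: "sqrt (pi / \<gamma>) > 0" using g by simp
    have "(sqrt (pi / \<gamma>) * exp (e\<^sup>2 / (4 * \<gamma>))) * normal_density \<mu> \<sigma> y
        = exp (e\<^sup>2 / (4 * \<gamma>)) * exp (-(y - \<mu>)\<^sup>2 / (2 * \<sigma>\<^sup>2))"
      unfolding normal_density_def sq using sp g by simp
    also have "\<dots> = exp (e\<^sup>2 / (4 * \<gamma>) + -(y - \<mu>)\<^sup>2 / (2 * \<sigma>\<^sup>2))" by (simp only: exp_add)
    also have "e\<^sup>2 / (4 * \<gamma>) + -(y - \<mu>)\<^sup>2 / (2 * \<sigma>\<^sup>2) = - \<gamma> * y\<^sup>2 + e * y"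
    proof -
      have t: "2 * \<sigma>\<^sup>2 = 1 / \<gamma>" using s2 by simp
      have "-(y - \<mu>)\<^sup>2 / (2 * \<sigma>\<^sup>2) = - \<gamma> * (y - \<mu>)\<^sup>2" unfolding t by simp
      moreover have "\<gamma> * (y - \<mu>)\<^sup>2 = \<gamma> * y\<^sup>2 - e * y + e\<^sup>2 / (4 * \<gamma>)"
        unfolding \<mu>_def power2_eq_square using g by (simp add: field_simps)
      ultimately show ?thesis by simp
    qed
    finally show ?thesis .
  qed
  ultimately show ?thesis by simp
qed

lemma gauss_int: "0 < (\<gamma>::real) \<Longrightarrow> integrable lborel (\<lambda>y. exp (- \<gamma> * y\<^sup>2 + e * y))"
  using gauss_hbi[of \<gamma> e] unfolding has_bochner_integral_iff by blast

lemma gauss_integral: "0 < (\<gamma>::real) \<Longrightarrow> (\<integral>y. exp (- \<gamma> * y\<^sup>2 + e * y) \<partial>lborel) = sqrt (pi / \<gamma>) * exp (e\<^sup>2 / (4 * \<gamma>))"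
  using gauss_hbi[of \<gamma> e] unfolding has_bochner_integral_iff by blast

lemma goodh_gauss:
  fixes \<gamma> a d :: real
  assumes "0 < \<gamma>"
  shows "goodh (\<lambda>y. a * exp (- \<gamma> * y\<^sup>2 + d * y))"
  unfolding goodh_def
proof safe
  show "(\<lambda>y. a * exp (- \<gamma> * y\<^sup>2 + d * y)) \<in> borel_measurable borel" by auto
  fix c
  show "integrable lborel (\<lambda>y. \<bar>a * exp (- \<gamma> * y\<^sup>2 + d * y)\<bar> * exp (c * \<bar>y\<bar>))"
  proof (rule Bochner_Integration.integrable_bound)
    show "integrable lborel (\<lambda>y. \<bar>a\<bar> * (exp (- \<gamma> * y\<^sup>2 + (d + c) * y) + exp (- \<gamma> * y\<^sup>2 + (d - c) * y)))"
      using gauss_int[OF assms] by auto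
    show "(\<lambda>y. \<bar>a * exp (- \<gamma> * y\<^sup>2 + d * y)\<bar> * exp (c * \<bar>y\<bar>)) \<in> borel_measurable lborel" by auto
    show "AE y in lborel. norm (\<bar>a * exp (- \<gamma> * y\<^sup>2 + d * y)\<bar> * exp (c * \<bar>y\<bar>))
        \<le> norm (\<bar>a\<bar> * (exp (- \<gamma> * y\<^sup>2 + (d + c) * y) + exp (- \<gamma> * y\<^sup>2 + (d - c) * y)))"
    proof (rule AE_I2)
      fix y :: real
      have "exp (c * \<bar>y\<bar>) \<le> exp (c * y) + exp (- (c * y))"
      proof (cases "0 \<le> y")
        case True
        then have "exp (c * \<bar>y\<bar>) = exp (c * y)" by simp
        then show ?thesis using exp_gt_zero[of "- (c * y)"] by linarith
      next
        case False
        then have "exp (c * \<bar>y\<bar>) = exp (- (c * y))" by simp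
        then show ?thesis using exp_gt_zero[of "c * y"] by linarith
      qed
      then have "exp (- \<gamma> * y\<^sup>2 + d * y) * exp (c * \<bar>y\<bar>)
          \<le> exp (- \<gamma> * y\<^sup>2 + d * y) * (exp (c * y) + exp (- (c * y)))"
        by (intro mult_left_mono) auto
      also have "\<dots> = exp (- \<gamma> * y\<^sup>2 + d * y + c * y) + exp (- \<gamma> * y\<^sup>2 + d * y + - (c * y))"
        by (simp only: distrib_left exp_add)
      also have "\<dots> = exp (- \<gamma> * y\<^sup>2 + (d + c) * y) + exp (- \<gamma> * y\<^sup>2 + (d - c) * y)"
        by (simp add: algebra_simps)
      finally have *: "exp (- \<gamma> * y\<^sup>2 + d * y) * exp (c * \<bar>y\<bar>)
          \<le> exp (- \<gamma> * y\<^sup>2 + (d + c) * y) + exp (- \<gamma> * y\<^sup>2 + (d - c) * y)" .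
      have "norm (\<bar>a * exp (- \<gamma> * y\<^sup>2 + d * y)\<bar> * exp (c * \<bar>y\<bar>))
          = \<bar>a\<bar> * (exp (- \<gamma> * y\<^sup>2 + d * y) * exp (c * \<bar>y\<bar>))"
        by (simp add: abs_mult)
      also have "\<dots> \<le> \<bar>a\<bar> * (exp (- \<gamma> * y\<^sup>2 + (d + c) * y) + exp (- \<gamma> * y\<^sup>2 + (d - c) * y))"
        using * by (intro mult_left_mono) auto
      finally show "norm (\<bar>a * exp (- \<gamma> * y\<^sup>2 + d * y)\<bar> * exp (c * \<bar>y\<bar>))
        \<le> norm (\<bar>a\<bar> * (exp (- \<gamma> * y\<^sup>2 + (d + c) * y) + exp (- \<gamma> * y\<^sup>2 + (d - c) * y)))"
        by simp
    qed
  qed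
qed

lemma goodh_add:
  assumes "goodh f" "goodh g" shows "goodh (\<lambda>y. f y + g y)"
  unfolding goodh_def
proof safe
  show "(\<lambda>y. f y + g y) \<in> borel_measurable borel" using assms goodh_def by auto
  fix c
  show "integrable lborel (\<lambda>y. \<bar>f y + g y\<bar> * exp (c * \<bar>y\<bar>))"
  proof (rule Bochner_Integration.integrable_bound)
    show "integrable lborel (\<lambda>y. \<bar>f y\<bar> * exp (c * \<bar>y\<bar>) + \<bar>g y\<bar> * exp (c * \<bar>y\<bar>))"
      using assms goodh_def by auto
    show "(\<lambda>y. \<bar>f y + g y\<bar> * exp (c * \<bar>y\<bar>)) \<in> borel_measurable lborel" using assms goodh_def by auto
    show "AE y in lborel. norm (\<bar>f y + g y\<bar> * exp (c * \<bar>y\<bar>)) \<le> norm (\<bar>f y\<bar> * exp (c * \<bar>y\<bar>) + \<bar>g y\<bar> * exp (c * \<bar>y\<bar>))"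
    proof (rule AE_I2)
      fix y
      have "\<bar>f y + g y\<bar> * exp (c * \<bar>y\<bar>) \<le> (\<bar>f y\<bar> + \<bar>g y\<bar>) * exp (c * \<bar>y\<bar>)"
        by (intro mult_right_mono) auto
      then show "norm (\<bar>f y + g y\<bar> * exp (c * \<bar>y\<bar>)) \<le> norm (\<bar>f y\<bar> * exp (c * \<bar>y\<bar>) + \<bar>g y\<bar> * exp (c * \<bar>y\<bar>))"
        by (simp add: algebra_simps)
    qed
  qed
qed

lemma goodh_zero: "goodh (\<lambda>y. 0)" unfolding goodh_def by auto

lemma goodh_sum:
  assumes "finite J" "\<And>i. i \<in> J \<Longrightarrow> goodh (g i)"
  shows "goodh (\<lambda>y. \<Sum>i\<in>J. g i y)"
  using assms
proof (induction J rule: finite_induct)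
  case empty then show ?case using goodh_zero by simp
next
  case (insert x F)
  then show ?case using goodh_add[of "g x" "\<lambda>y. \<Sum>i\<in>F. g i y"] by simp
qed

lemma Lap_sum:
  assumes "finite J" "\<And>i. i \<in> J \<Longrightarrow> goodh (g i)"
  shows "Lap (\<lambda>y. \<Sum>i\<in>J. g i y) t = (\<Sum>i\<in>J. Lap (g i) t)"
proof -
  have "Lap (\<lambda>y. \<Sum>i\<in>J. g i y) t = (\<integral>y. (\<Sum>i\<in>J. g i y * exp (t * y)) \<partial>lborel)"
    unfolding Lap_def by (simp add: sum_distrib_right)
  also have "\<dots> = (\<Sum>i\<in>J. Lap (g i) t)"
    unfolding Lap_def by (rule Bochner_Integration.integral_sum) (use assms goodh_int in auto)
  finally show ?thesis .
qed

lemma Lap_gauss: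
  fixes \<gamma> a d :: real
  assumes "0 < \<gamma>"
  shows "Lap (\<lambda>y. a * exp (- \<gamma> * y\<^sup>2 + d * y)) t = a * (sqrt (pi / \<gamma>) * exp ((d + t)\<^sup>2 / (4 * \<gamma>)))"
proof -
  have "Lap (\<lambda>y. a * exp (- \<gamma> * y\<^sup>2 + d * y)) t = (\<integral>y. a * exp (- \<gamma> * y\<^sup>2 + (d + t) * y) \<partial>lborel)"
    unfolding Lap_def by (intro Bochner_Integration.integral_cong refl) (simp only: mult.assoc exp_add[symmetric], simp add: algebra_simps)
  also have "\<dots> = a * (sqrt (pi / \<gamma>) * exp ((d + t)\<^sup>2 / (4 * \<gamma>)))"
    using gauss_integral[OF assms] by simp
  finally show ?thesis .
qed



lemma zb_scale:
  assumes "zb L r" "(k::real) \<noteq> 0"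
  shows "zb (\<lambda>x. L (k * x)) r"
proof -
  have eq: "{x. L (k * x) = 0} = (\<lambda>t. t / k) ` {t. L t = 0}"
    using assms(2) by (auto simp: image_iff) (metis nonzero_mult_div_cancel_left)
  have inj: "inj_on (\<lambda>t. t / k) {t. L t = 0}" using assms(2) by (auto simp: inj_on_def)
  show ?thesis using assms(1) unfolding zb_def eq
    by (auto simp: card_image[OF inj] finite_imageI)
qed

lemma zb_factor:
  assumes "zb F r" "\<And>x. E x \<noteq> (0::real)"
  shows "zb (\<lambda>x. E x * F x) r"
proof -
  have "{x. E x * F x = 0} = {x. F x = 0}" using assms(2) by auto
  then show ?thesis using assms(1) unfolding zb_def by auto
qed

lemma gauss_ident:
  fixes al A b a x :: real
  assumes "0 < al" "al < A"
  defines "gam \<equiv> A\<^sup>2 / (A - al)"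
  defines "d \<equiv> b * A / (A - al)"
  shows "a * exp (- al * x\<^sup>2 + b * x) =
    exp (- A * x\<^sup>2) * Lap (\<lambda>y. (a / (sqrt (pi / gam) * exp (d\<^sup>2 / (4 * gam)))) * exp (- gam * y\<^sup>2 + d * y)) (2 * A * x)"
proof -
  have Apos: "0 < A" using assms by simp
  have dpos: "0 < A - al" using assms by simp
  have gpos: "0 < gam" unfolding gam_def using Apos dpos by simp
  have sp: "0 < sqrt (pi / gam)" using gpos by simp
  have ex: "- A * x\<^sup>2 + (d + 2 * A * x)\<^sup>2 / (4 * gam) = d\<^sup>2 / (4 * gam) + (- al * x\<^sup>2 + b * x)"
  proof -
    have g0: "gam \<noteq> 0" using gpos by simp
    have e1: "(d + 2 * A * x)\<^sup>2 / (4 * gam) = d\<^sup>2 / (4 * gam) + (A * d * x + A\<^sup>2 * x\<^sup>2) / gam"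
      using g0 by (simp add: field_simps power2_eq_square)
    have dd: "d * (A - al) = b * A" unfolding d_def using dpos by simp
    have "(A * d * x + A\<^sup>2 * x\<^sup>2) / gam = (A * d * x + A\<^sup>2 * x\<^sup>2) * (A - al) / A\<^sup>2"
      unfolding gam_def using dpos Apos by simp
    also have "\<dots> = (A * x * (d * (A - al)) + A\<^sup>2 * x\<^sup>2 * (A - al)) / A\<^sup>2"
      by (simp add: algebra_simps)
    also have "\<dots> = b * x + (A - al) * x\<^sup>2"
      unfolding dd using Apos by (simp add: field_simps power2_eq_square)
    finally show ?thesis using e1 by (simp add: algebra_simps)
  qed
  have "exp (- A * x\<^sup>2) * Lap (\<lambda>y. (a / (sqrt (pi / gam) * exp (d\<^sup>2 / (4 * gam)))) * exp (- gam * y\<^sup>2 + d * y)) (2 * A * x)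
      = exp (- A * x\<^sup>2) * ((a / (sqrt (pi / gam) * exp (d\<^sup>2 / (4 * gam)))) * (sqrt (pi / gam) * exp ((d + 2 * A * x)\<^sup>2 / (4 * gam))))"
    by (simp only: Lap_gauss[OF gpos])
  also have "\<dots> = a * (exp (- A * x\<^sup>2) * exp ((d + 2 * A * x)\<^sup>2 / (4 * gam))) / exp (d\<^sup>2 / (4 * gam))"
    using sp gpos by (simp add: field_simps)
  also have "exp (- A * x\<^sup>2) * exp ((d + 2 * A * x)\<^sup>2 / (4 * gam)) = exp (d\<^sup>2 / (4 * gam)) * exp (- al * x\<^sup>2 + b * x)"
    by (simp only: exp_add[symmetric] ex)
  finally show ?thesis by simp
qed

lemma gauss_zeros:
  fixes I :: "'a set" and a al b :: "'a \<Rightarrow> real"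
  assumes "finite I" "\<And>i. i \<in> I \<Longrightarrow> 0 < al i"
  shows "zb (\<lambda>x. \<Sum>i\<in>I. a i * exp (- al i * x\<^sup>2 + b i * x)) (2 * card I - 2)"
  using assms
proof (induction "card I" arbitrary: I a al b rule: less_induct)
  case less
  note fI = less(2) and pos = less(3)
  show ?case
  proof (cases "I = {}")
    case True then show ?thesis unfolding zb_def by simp
  next
    case False
    define A where "A = Max (al ` I)"
    have AI: "A \<in> al ` I" using fI False by (simp add: A_def)
    have Age: "\<And>i. i \<in> I \<Longrightarrow> al i \<le> A" using fI by (simp add: A_def)
    have Apos: "0 < A" using AI pos by auto
    define Is where "Is = {i\<in>I. al i = A}"
    define J where "J = {i\<in>I. al i < A}"
    have IsJ: "I = J \<union> Is" "J \<inter> Is = {}" using Age by (auto simp: Is_def J_def less_le)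
    have Isne: "Is \<noteq> {}" using AI by (auto simp: Is_def)
    have fJ: "finite J" and fIs: "finite Is" using fI by (auto simp: J_def Is_def)
    have cI: "card I = card J + card Is" using IsJ fJ fIs by (simp add: card_Un_disjoint)
    have cIs: "card Is > 0" using Isne fIs by (simp add: card_gt_0_iff)
    have cJ: "card J < card I" using cI cIs by simp
    define gam where "gam i = A\<^sup>2 / (A - al i)" for i
    define d where "d i = b i * A / (A - al i)" for i
    define a' where "a' i = a i / (sqrt (pi / gam i) * exp ((d i)\<^sup>2 / (4 * gam i)))" for i
    have gpos: "\<And>i. i \<in> J \<Longrightarrow> 0 < gam i" using Apos by (auto simp: gam_def J_def)
    define h where "h y = (\<Sum>i\<in>J. a' i * exp (- gam i * y\<^sup>2 + d i * y))" for y
    have IH: "zb h (2 * card J - 2)"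
      unfolding h_def[abs_def] by (rule less(1)[OF cJ fJ]) (use gpos in auto)
    have gh: "goodh h"
      unfolding h_def[abs_def] by (rule goodh_sum[OF fJ]) (use gpos goodh_gauss in auto)
    have contf: "continuous_on UNIV h" unfolding h_def[abs_def] by (intro continuous_intros)
    then have isc: "isCont h x" for x by (simp add: continuous_on_eq_continuous_at)
    define z where "z i = b i / (2 * A)" for i
    define D where "D = z ` Is"
    define c where "c w = (\<Sum>i\<in>{i\<in>Is. z i = w}. a i)" for w
    define L where "L t = Lap h t + (\<Sum>w\<in>D. c w * exp (t * w))" for t
    have fD: "finite D" using fIs by (simp add: D_def)
    have cD: "card D \<le> card Is" unfolding D_def using fIs by (rule card_image_le)
    have ident: "(\<Sum>i\<in>I. a i * exp (- al i * x\<^sup>2 + b i * x)) = exp (- A * x\<^sup>2) * L (2 * A * x)" for x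
    proof -
      have sJ: "(\<Sum>i\<in>J. a i * exp (- al i * x\<^sup>2 + b i * x)) = exp (- A * x\<^sup>2) * Lap h (2 * A * x)"
      proof -
        have "(\<Sum>i\<in>J. a i * exp (- al i * x\<^sup>2 + b i * x))
            = (\<Sum>i\<in>J. exp (- A * x\<^sup>2) * Lap (\<lambda>y. a' i * exp (- gam i * y\<^sup>2 + d i * y)) (2 * A * x))"
          by (intro sum.cong refl) (unfold a'_def gam_def d_def, rule gauss_ident, use pos J_def in auto)
        also have "\<dots> = exp (- A * x\<^sup>2) * (\<Sum>i\<in>J. Lap (\<lambda>y. a' i * exp (- gam i * y\<^sup>2 + d i * y)) (2 * A * x))"
          by (simp add: sum_distrib_left)
        also have "(\<Sum>i\<in>J. Lap (\<lambda>y. a' i * exp (- gam i * y\<^sup>2 + d i * y)) (2 * A * x)) = Lap h (2 * A * x)"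
          unfolding h_def[abs_def] by (rule Lap_sum[symmetric, OF fJ]) (use gpos goodh_gauss in auto)
        finally show ?thesis .
      qed
      have sIs: "(\<Sum>i\<in>Is. a i * exp (- al i * x\<^sup>2 + b i * x)) = exp (- A * x\<^sup>2) * (\<Sum>w\<in>D. c w * exp ((2 * A * x) * w))"
      proof -
        have "(\<Sum>i\<in>Is. a i * exp (- al i * x\<^sup>2 + b i * x)) = (\<Sum>i\<in>Is. exp (- A * x\<^sup>2) * (a i * exp ((2 * A * x) * z i)))"
        proof (intro sum.cong refl)
          fix i assume "i \<in> Is"
          then have al: "al i = A" by (simp add: Is_def)
          have e: "(2 * A * x) * z i = b i * x" unfolding z_def using Apos by simp
          show "a i * exp (- al i * x\<^sup>2 + b i * x) = exp (- A * x\<^sup>2) * (a i * exp ((2 * A * x) * z i))"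
            unfolding al e exp_add by (simp add: algebra_simps)
        qed
        also have "\<dots> = exp (- A * x\<^sup>2) * (\<Sum>i\<in>Is. a i * exp ((2 * A * x) * z i))"
          by (simp add: sum_distrib_left)
        also have "(\<Sum>i\<in>Is. a i * exp ((2 * A * x) * z i)) = (\<Sum>w\<in>D. \<Sum>i\<in>{i\<in>Is. z i = w}. a i * exp ((2 * A * x) * z i))"
          unfolding D_def by (rule sum.image_gen[OF fIs])
        also have "\<dots> = (\<Sum>w\<in>D. c w * exp ((2 * A * x) * w))"
          unfolding c_def by (intro sum.cong refl) (simp add: sum_distrib_right)
        finally show ?thesis .
      qed
      have "(\<Sum>i\<in>I. a i * exp (- al i * x\<^sup>2 + b i * x))
          = (\<Sum>i\<in>J. a i * exp (- al i * x\<^sup>2 + b i * x)) + (\<Sum>i\<in>Is. a i * exp (- al i * x\<^sup>2 + b i * x))"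
        unfolding IsJ(1) using fJ fIs IsJ(2) by (rule sum.union_disjoint)
      then show ?thesis unfolding sJ sIs L_def by (simp add: algebra_simps)
    qed
    have zbL: "zb L (2 * card I - 2)"
    proof (cases "\<forall>y. h y = 0")
      case True
      then have "Lap h t = 0" for t unfolding Lap_def by simp
      then have "L t = (\<Sum>w\<in>D. c w * exp (t * w))" for t unfolding L_def by simp
      then have "zb L (card D - 1)" using expsum_zeros[OF fD, of c] zb_cong by blast
      then show ?thesis by (rule zb_mono) (use cD cI in simp)
    next
      case False
      then have Jne: "J \<noteq> {}" unfolding h_def by auto
      then have cJ1: "card J \<ge> 1" using fJ by (simp add: Suc_le_eq card_gt_0_iff)
      define Z where "Z = {y. h y = 0}"
      have fZ: "finite Z" and cZ: "card Z \<le> 2 * card J - 2"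
        using IH False unfolding zb_def Z_def by auto
      define C where "C = Z \<union> D"
      have fC: "finite C" using fZ fD by (simp add: C_def)
      have V: "0 \<le> h x * h y" if xy: "x < y" "\<forall>w\<in>C. \<not> (x < w \<and> w < y)" for x y
      proof (rule ccontr)
        assume "\<not> 0 \<le> h x * h y"
        then have neg: "h x * h y < 0" by simp
        then have nz: "h x \<noteq> 0" "h y \<noteq> 0" by auto
        have "\<exists>w\<ge>x. w \<le> y \<and> h w = 0"
        proof (cases "h x < 0")
          case True
          then have "0 < h y" using neg by (simp add: mult_less_0_iff)
          then show ?thesis using IVT[of h x 0 y] True xy isc by auto
        next
          case False
          then have "0 < h x" using nz by simp
          then have "h y < 0" using neg by (simp add: mult_less_0_iff)
          then show ?thesis using IVT2[of h y 0 x] \<open>0 < h x\<close> xy isc by auto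
        qed
        then obtain w where w: "x \<le> w" "w \<le> y" "h w = 0" by auto
        then have "x < w" "w < y" using nz by (auto simp: le_less)
        moreover have "w \<in> C" using w by (simp add: C_def Z_def)
        ultimately show False using xy by auto
      qed
      have "zb (\<lambda>t. Lap h t + (\<Sum>w\<in>D. c w * exp (t * w))) (card C + card D)"
        by (rule LT[OF fC _ gh V]) (auto simp: C_def)
      then have "zb L (card C + card D)" unfolding L_def by simp
      moreover have "card C \<le> card Z + card D" unfolding C_def by (rule card_Un_le)
      ultimately show ?thesis using cZ cD cI cJ1 by (elim zb_mono) simp
    qed
    have "zb (\<lambda>x. exp (- A * x\<^sup>2) * L (2 * A * x)) (2 * card I - 2)"
      by (rule zb_factor[OF zb_scale[OF zbL]]) (use Apos in auto)
    then show ?thesis by (rule zb_cong) (rule ident)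
  qed
qed



definition mcoef :: "(nat \<Rightarrow> real) \<Rightarrow> (nat \<Rightarrow> real) \<Rightarrow> (nat \<Rightarrow> real) \<Rightarrow> nat \<Rightarrow> real" where
  "mcoef w mu tau i = w i * (tau i / sqrt (2 * pi)) * exp (- ((tau i)\<^sup>2 * (mu i)\<^sup>2) / 2)"

lemma mixture_gauss:
  "mixture k (w, mu, tau) x = (\<Sum>i<k. mcoef w mu tau i * exp (- ((tau i)\<^sup>2 / 2) * x\<^sup>2 + ((tau i)\<^sup>2 * mu i) * x))"
  unfolding mixture_def
proof (simp only: prod.case, intro sum.cong refl)
  fix i
  have "- ((tau i)\<^sup>2 * (x - mu i)\<^sup>2) / 2 = - ((tau i)\<^sup>2 * (mu i)\<^sup>2) / 2 + (- ((tau i)\<^sup>2 / 2) * x\<^sup>2 + ((tau i)\<^sup>2 * mu i) * x)"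
    by (simp add: power2_eq_square field_simps)
  then show "w i * (tau i / sqrt (2 * pi)) * exp (- ((tau i)\<^sup>2 * (x - mu i)\<^sup>2) / 2) =
    mcoef w mu tau i * exp (- ((tau i)\<^sup>2 / 2) * x\<^sup>2 + (tau i)\<^sup>2 * mu i * x)"
    unfolding mcoef_def by (simp only: exp_add mult.assoc)
qed

lemma mixture_diff_gauss:
  fixes w1 mu1 tau1 w2 mu2 tau2 :: "nat \<Rightarrow> real"
  defines "A \<equiv> case_sum (mcoef w1 mu1 tau1) (\<lambda>i. - mcoef w2 mu2 tau2 i)"
  defines "AL \<equiv> case_sum (\<lambda>i. (tau1 i)\<^sup>2 / 2) (\<lambda>i. (tau2 i)\<^sup>2 / 2)"
  defines "B \<equiv> case_sum (\<lambda>i. (tau1 i)\<^sup>2 * mu1 i) (\<lambda>i. (tau2 i)\<^sup>2 * mu2 i)"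
  shows "mixture k (w1, mu1, tau1) x - mixture k (w2, mu2, tau2) x
    = (\<Sum>j\<in>{..<k} <+> {..<k}. A j * exp (- AL j * x\<^sup>2 + B j * x))"
  unfolding mixture_gauss
  by (simp add: sum.Plus A_def AL_def B_def comp_def sum_negf)

lemma mixture_zb:
  assumes "(w1, mu1, tau1) \<in> Theta k" "(w2, mu2, tau2) \<in> Theta k"
  shows "zb (\<lambda>x. mixture k (w1, mu1, tau1) x - mixture k (w2, mu2, tau2) x) (4 * k - 2)"
proof -
  define A where "A = case_sum (mcoef w1 mu1 tau1) (\<lambda>i. - mcoef w2 mu2 tau2 i)"
  define AL where "AL = case_sum (\<lambda>i. (tau1 i)\<^sup>2 / 2) (\<lambda>i. (tau2 i)\<^sup>2 / 2)"
  define B where "B = case_sum (\<lambda>i. (tau1 i)\<^sup>2 * mu1 i) (\<lambda>i. (tau2 i)\<^sup>2 * mu2 i)"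
  have pos: "0 < AL j" if "j \<in> {..<k} <+> {..<k}" for j
    using that assms unfolding Theta_def AL_def by auto
  have "zb (\<lambda>x. \<Sum>j\<in>{..<k} <+> {..<k}. A j * exp (- AL j * x\<^sup>2 + B j * x)) (2 * card ({..<k} <+> {..<k}) - 2)"
    by (rule gauss_zeros) (use pos in auto)
  moreover have "card ({..<k::nat} <+> {..<k}) = 2 * k" by (simp add: card_Plus)
  ultimately show ?thesis
    unfolding A_def AL_def B_def by (rule_tac zb_cong) (auto simp: mixture_diff_gauss)
qed

lemma mixture_integrable:
  assumes "(w, mu, tau) \<in> Theta k"
  shows "integrable lborel (mixture k (w, mu, tau))"
proof -
  have "integrable lborel (\<lambda>x. \<Sum>i<k. mcoef w mu tau i * exp (- ((tau i)\<^sup>2 / 2) * x\<^sup>2 + ((tau i)\<^sup>2 * mu i) * x))"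
  proof (rule Bochner_Integration.integrable_sum)
    fix i assume "i \<in> {..<k}"
    then have "0 < (tau i)\<^sup>2 / 2" using assms unfolding Theta_def by auto
    then show "integrable lborel (\<lambda>x. mcoef w mu tau i * exp (- ((tau i)\<^sup>2 / 2) * x\<^sup>2 + ((tau i)\<^sup>2 * mu i) * x))"
      using gauss_int[of "(tau i)\<^sup>2 / 2" "(tau i)\<^sup>2 * mu i"] by (intro integrable_mult_right)
  qed
  then show ?thesis unfolding mixture_gauss[abs_def] .
qed

lemma mixture_cont: "continuous_on UNIV (mixture k \<theta>)"
  unfolding mixture_def[abs_def] by (cases \<theta>) (auto intro!: continuous_intros)



lemma indicator_sum_le:
  assumes "finite F" "\<forall>I\<in>F. \<forall>J\<in>F. I \<noteq> J \<longrightarrow> I \<inter> J = {}"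
  shows "(\<Sum>I\<in>F. indicator I x :: real) \<le> 1"
    and "(\<exists>I\<in>F. x \<in> I) \<Longrightarrow> (\<Sum>I\<in>F. indicator I x :: real) = 1"
proof -
  have main: "(\<Sum>I\<in>F. indicator I x :: real) = 1" if "I0 \<in> F" "x \<in> I0" for I0
  proof -
    have "(\<Sum>I\<in>F. indicator I x :: real) = indicator I0 x + (\<Sum>I\<in>F - {I0}. indicator I x)"
      using sum.remove[OF assms(1) that(1), of "\<lambda>I. indicator I x"] by simp
    also have "(\<Sum>I\<in>F - {I0}. indicator I x :: real) = 0"
      by (rule sum.neutral) (use assms(2) that in \<open>auto simp: indicator_def\<close>)
    finally show ?thesis using that by simp
  qed
  show "(\<exists>I\<in>F. x \<in> I) \<Longrightarrow> (\<Sum>I\<in>F. indicator I x :: real) = 1" using main by blast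
  show "(\<Sum>I\<in>F. indicator I x :: real) \<le> 1"
  proof (cases "\<exists>I\<in>F. x \<in> I")
    case True then show ?thesis using main by force
  next
    case False then have "(\<Sum>I\<in>F. indicator I x :: real) = 0" by (intro sum.neutral) auto
    then show ?thesis by simp
  qed
qed

lemma si_abs_le:
  fixes g :: "real \<Rightarrow> real"
  assumes "integrable lborel g" "I \<in> sets borel"
  shows "\<bar>set_lebesgue_integral lborel I g\<bar> \<le> set_lebesgue_integral lborel I (\<lambda>x. \<bar>g x\<bar>)"
  unfolding set_lebesgue_integral_def
proof (rule integral_abs_bound_integral)
  show "integrable lborel (\<lambda>x. indicator I x *\<^sub>R g x)" using assms by (intro integrable_mult_indicator) auto
  show "integrable lborel (\<lambda>x. indicator I x *\<^sub>R \<bar>g x\<bar>)" using assms by (intro integrable_mult_indicator) auto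
  show "\<bar>indicator I x *\<^sub>R g x\<bar> \<le> indicator I x *\<^sub>R \<bar>g x\<bar>" for x by (simp add: indicator_def)
qed

lemma si_sum:
  fixes g :: "real \<Rightarrow> real"
  assumes "integrable lborel g" "finite F" "\<forall>I\<in>F. I \<in> sets borel"
  shows "(\<Sum>I\<in>F. set_lebesgue_integral lborel I (\<lambda>x. \<bar>g x\<bar>)) = (\<integral>x. (\<Sum>I\<in>F. indicator I x) * \<bar>g x\<bar> \<partial>lborel)"
proof -
  have "(\<Sum>I\<in>F. set_lebesgue_integral lborel I (\<lambda>x. \<bar>g x\<bar>)) = (\<integral>x. (\<Sum>I\<in>F. indicator I x * \<bar>g x\<bar>) \<partial>lborel)"
    unfolding set_lebesgue_integral_def real_scaleR_def
    by (rule Bochner_Integration.integral_sum[symmetric])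
       (use assms in \<open>auto intro!: integrable_mult_indicator[where 'b=real, simplified]\<close>)
  then show ?thesis by (simp add: sum_distrib_right)
qed

lemma family_upper:
  fixes g :: "real \<Rightarrow> real"
  assumes g: "integrable lborel g" and F: "F \<in> interval_families K"
  shows "(\<Sum>I\<in>F. \<bar>LINT x:I|lborel. g x\<bar>) \<le> L1_norm g"
proof -
  have fF: "finite F" and dis: "\<forall>I\<in>F. \<forall>J\<in>F. I \<noteq> J \<longrightarrow> I \<inter> J = {}"
    and meas: "\<forall>I\<in>F. I \<in> sets borel"
    using F unfolding interval_families_def by (auto intro: real_interval_borel_measurable)
  have "(\<Sum>I\<in>F. \<bar>LINT x:I|lborel. g x\<bar>) \<le> (\<Sum>I\<in>F. set_lebesgue_integral lborel I (\<lambda>x. \<bar>g x\<bar>))"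
    by (intro sum_mono si_abs_le g) (use meas in auto)
  also have "\<dots> = (\<integral>x. (\<Sum>I\<in>F. indicator I x) * \<bar>g x\<bar> \<partial>lborel)"
    by (rule si_sum[OF g fF meas])
  also have "\<dots> \<le> (\<integral>x. \<bar>g x\<bar> \<partial>lborel)"
  proof (rule integral_mono)
    show "integrable lborel (\<lambda>x. (\<Sum>I\<in>F. indicator I x) * \<bar>g x\<bar>)"
      using g meas by (auto simp: sum_distrib_right intro!: integrable_mult_indicator[where 'b=real, simplified])
    show "integrable lborel (\<lambda>x. \<bar>g x\<bar>)" using g by auto
    show "(\<Sum>I\<in>F. indicator I x) * \<bar>g x\<bar> \<le> \<bar>g x\<bar>" for x
      using indicator_sum_le(1)[OF fF dis, of x] by (simp add: mult_left_le_one_le sum_nonneg)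
  qed
  finally show ?thesis unfolding L1_norm_def .
qed



lemma sign_setint:
  fixes g :: "real \<Rightarrow> real"
  assumes g: "integrable lborel g" and cont: "continuous_on UNIV g" and Im: "I \<in> sets borel"
    and nz: "(\<forall>x. g x = 0) \<or> (\<forall>a\<in>I. \<forall>b\<in>I. \<forall>z. a < z \<and> z < b \<longrightarrow> g z \<noteq> 0)"
  shows "\<bar>set_lebesgue_integral lborel I g\<bar> = set_lebesgue_integral lborel I (\<lambda>x. \<bar>g x\<bar>)"
proof (cases "\<forall>x. g x = 0")
  case True then show ?thesis by (simp add: set_lebesgue_integral_def)
next
  case False
  then have nz': "\<And>a b z. a \<in> I \<Longrightarrow> b \<in> I \<Longrightarrow> a < z \<Longrightarrow> z < b \<Longrightarrow> g z \<noteq> 0" using nz by auto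
  have isc: "isCont g x" for x using cont by (simp add: continuous_on_eq_continuous_at)
  have noswitch: False if ab: "a \<in> I" "b \<in> I" "g a < 0" "0 < g b" for a b
  proof (cases a b rule: linorder_cases)
    case less
    obtain z where "a \<le> z" "z \<le> b" "g z = 0" using IVT[of g a 0 b] ab less isc by auto
    moreover then have "a < z" "z < b" using ab by (auto simp: le_less)
    ultimately show False using nz'[OF ab(1,2)] by auto
  next
    case equal then show False using ab by simp
  next
    case greater
    obtain z where "b \<le> z" "z \<le> a" "g z = 0" using IVT2[of g a 0 b] ab greater isc by auto
    moreover then have "b < z" "z < a" using ab by (auto simp: le_less)
    ultimately show False using nz'[OF ab(2,1)] by auto
  qed
  have sgn: "(\<forall>x\<in>I. 0 \<le> g x) \<or> (\<forall>x\<in>I. g x \<le> 0)"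
    using noswitch by (meson not_le)
  have int1: "integrable lborel (\<lambda>x. indicator I x *\<^sub>R g x)" using g Im by (intro integrable_mult_indicator) auto
  from sgn show ?thesis
  proof
    assume pos: "\<forall>x\<in>I. 0 \<le> g x"
    have eq: "set_lebesgue_integral lborel I (\<lambda>x. \<bar>g x\<bar>) = set_lebesgue_integral lborel I g"
      unfolding set_lebesgue_integral_def
      by (intro Bochner_Integration.integral_cong refl) (use pos in \<open>auto simp: indicator_def\<close>)
    have "0 \<le> set_lebesgue_integral lborel I g"
      unfolding set_lebesgue_integral_def
      by (rule integral_nonneg_AE) (use pos in \<open>auto simp: indicator_def\<close>)
    then show ?thesis using eq by simp
  next
    assume neg: "\<forall>x\<in>I. g x \<le> 0"
    have eq: "set_lebesgue_integral lborel I (\<lambda>x. \<bar>g x\<bar>) = - set_lebesgue_integral lborel I g"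
    proof -
      have "set_lebesgue_integral lborel I (\<lambda>x. \<bar>g x\<bar>) = (\<integral>x. - (indicator I x *\<^sub>R g x) \<partial>lborel)"
        unfolding set_lebesgue_integral_def
        by (intro Bochner_Integration.integral_cong refl) (use neg in \<open>auto simp: indicator_def\<close>)
      then show ?thesis unfolding set_lebesgue_integral_def by simp
    qed
    have "0 \<le> - set_lebesgue_integral lborel I g"
    proof -
      have "0 \<le> (\<integral>x. - (indicator I x *\<^sub>R g x) \<partial>lborel)"
        by (rule integral_nonneg_AE) (use neg in \<open>auto simp: indicator_def\<close>)
      then show ?thesis unfolding set_lebesgue_integral_def by simp
    qed
    then show ?thesis using eq by simp
  qed
qed

lemma partition_exists:
  fixes C :: "real set"
  assumes fC: "finite C"
  shows "\<exists>F. F \<in> interval_families (Suc (card C)) \<and> \<Union>F = UNIV \<and>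
            (\<forall>I\<in>F. \<forall>a\<in>I. \<forall>b\<in>I. \<forall>z. a < z \<and> z < b \<longrightarrow> z \<notin> C)"
proof -
  define Im where "Im = {x. \<forall>d\<in>C. x \<le> d}"
  define Ic where "Ic c = {x. c < x \<and> (\<forall>d\<in>C. c < d \<longrightarrow> x \<le> d)}" for c
  define F where "F = insert Im (Ic ` C)"
  have Imne: "Im \<noteq> {}"
  proof (cases "C = {}")
    case True then show ?thesis by (simp add: Im_def)
  next
    case False
    have "\<forall>d\<in>C. Min C \<le> d" using fC by simp
    then have "Min C - 1 \<in> Im" by (force simp: Im_def)
    then show ?thesis by auto
  qed
  have Icne: "Ic c \<noteq> {}" for c
  proof (cases "\<exists>d\<in>C. c < d")
    case True
    define m where "m = Min {d\<in>C. c < d}"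
    have fin: "finite {d\<in>C. c < d}" and ne: "{d\<in>C. c < d} \<noteq> {}" using True fC by auto
    have mem: "m \<in> {d\<in>C. c < d}" unfolding m_def using Min_in[OF fin ne] .
    have le: "\<And>d. d \<in> C \<Longrightarrow> c < d \<Longrightarrow> m \<le> d" unfolding m_def using fin by simp
    have "m \<in> Ic c" unfolding Ic_def using mem le by auto
    then show ?thesis by auto
  next
    case False
    then have "c + 1 \<in> Ic c" unfolding Ic_def by auto
    then show ?thesis by auto
  qed
  have disIc: "Ic c \<inter> Ic c' = {}" if "c \<in> C" "c' \<in> C" "c \<noteq> c'" for c c'
  proof -
    { fix c c' assume "c \<in> C" "c' \<in> C" "c < c'"
      then have "Ic c \<inter> Ic c' = {}" unfolding Ic_def by force }
    then show ?thesis using that by (metis inf_commute linorder_neqE_linordered_idom)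
  qed
  have disIm: "Im \<inter> Ic c = {}" if "c \<in> C" for c
    using that unfolding Im_def Ic_def by force
  have inj: "inj_on Ic C"
    by (rule inj_onI) (metis Icne disIc inf.idem)
  have ImIc: "Im \<notin> Ic ` C" using disIm Imne by (metis image_iff inf.idem)
  have cardF: "card F = Suc (card C)"
    unfolding F_def using ImIc fC by (simp add: card_image[OF inj])
  have intv: "is_interval I" if "I \<in> F" for I
    using that unfolding F_def is_interval_1 Im_def Ic_def by (force intro: order_trans)
  have dis: "\<forall>I\<in>F. \<forall>J\<in>F. I \<noteq> J \<longrightarrow> I \<inter> J = {}"
    unfolding F_def using disIc disIm by blast
  have cover: "\<Union>F = UNIV"
  proof (rule set_eqI, rule iffI)
    show "x \<in> UNIV" for x :: real by simp
  next
    fix x :: real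
    show "x \<in> \<Union>F"
    proof (cases "\<forall>d\<in>C. x \<le> d")
      case True then show ?thesis unfolding F_def Im_def by auto
    next
      case False
      define S where "S = {d\<in>C. d < x}"
      have Sne: "S \<noteq> {}" and fS: "finite S" using False fC by (auto simp: S_def not_le)
      define c where "c = Max S"
      have cS: "c \<in> S" using Sne fS c_def by simp
      have "x \<in> Ic c"
        unfolding Ic_def
      proof safe
        show "c < x" using cS by (simp add: S_def)
        fix d assume "d \<in> C" "c < d"
        then show "x \<le> d" using fS c_def by (metis (mono_tags, lifting) Max_ge S_def le_less_linear mem_Collect_eq not_le)
      qed
      moreover have "c \<in> C" using cS by (simp add: S_def)
      ultimately show ?thesis unfolding F_def by auto
    qed
  qed
  have noC: "\<forall>I\<in>F. \<forall>a\<in>I. \<forall>b\<in>I. \<forall>z. a < z \<and> z < b \<longrightarrow> z \<notin> C"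
    unfolding F_def Im_def Ic_def by force
  have "F \<in> interval_families (Suc (card C))"
    unfolding interval_families_def using cardF intv dis fC by (auto simp: F_def)
  then show ?thesis using cover noC by blast
qed



theorem corollary10:
  fixes k K :: nat and \<theta>1 \<theta>2 :: param
  assumes "\<theta>1 \<in> Theta k" and "\<theta>2 \<in> Theta k" and "K \<ge> 4 * k"
  shows "AK_norm K (\<lambda>x. mixture k \<theta>1 x - mixture k \<theta>2 x)
       = L1_norm (\<lambda>x. mixture k \<theta>1 x - mixture k \<theta>2 x)"
proof -
  obtain w1 mu1 tau1 where t1: "\<theta>1 = (w1, mu1, tau1)" by (cases \<theta>1) auto
  obtain w2 mu2 tau2 where t2: "\<theta>2 = (w2, mu2, tau2)" by (cases \<theta>2) auto
  define g where "g = (\<lambda>x. mixture k \<theta>1 x - mixture k \<theta>2 x)"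
  have gi: "integrable lborel g"
    unfolding g_def using mixture_integrable assms(1,2) t1 t2 by (intro Bochner_Integration.integrable_diff) auto
  have gc: "continuous_on UNIV g"
    unfolding g_def using mixture_cont by (intro continuous_intros) auto
  have gz: "zb g (4 * k - 2)"
    unfolding g_def t1 t2 using mixture_zb assms(1,2) t1 t2 by simp
  have k0: "\<forall>x. g x = 0" if "k = 0"
    using that unfolding g_def mixture_def by (simp add: t1 t2)
  define S where "S F = (\<Sum>I\<in>F. \<bar>LINT x:I|lborel. g x\<bar>)" for F
  have up: "S F \<le> L1_norm g" if "F \<in> interval_families K" for F
    unfolding S_def by (rule family_upper[OF gi that])
  have att: "\<exists>F\<in>interval_families K. S F = L1_norm g"
  proof (cases "K = 0")
    case True
    then have "\<forall>x. g x = 0" using k0 assms(3) by simp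
    moreover have "{} \<in> interval_families K" using True by (simp add: interval_families_def)
    ultimately show ?thesis by (intro bexI[of _ "{}"]) (auto simp: S_def L1_norm_def)
  next
    case False
    obtain C where fC: "finite C" and cC: "card C \<le> K - 1"
      and zC: "(\<forall>x. g x = 0) \<or> {x. g x = 0} \<subseteq> C"
    proof (cases "\<forall>x. g x = 0")
      case True then show ?thesis using that[of "{}"] by auto
    next
      case False
      then have "k \<noteq> 0" using k0 by auto
      moreover have "finite {x. g x = 0}" "card {x. g x = 0} \<le> 4 * k - 2"
        using gz False unfolding zb_def by auto
      ultimately show ?thesis using that[of "{x. g x = 0}"] assms(3) by auto
    qed
    have "infinite (UNIV - C :: real set)" using fC by (simp add: infinite_UNIV_char_0 Diff_infinite_finite)
    then obtain S0 where S0: "finite S0" "card S0 = K - 1 - card C" "S0 \<subseteq> UNIV - C"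
      using infinite_arbitrarily_large by blast
    define C' where "C' = C \<union> S0"
    have fC': "finite C'" using fC S0 by (simp add: C'_def)
    have cC': "card C' = K - 1"
      unfolding C'_def using fC S0 cC by (subst card_Un_disjoint) auto
    obtain F where F: "F \<in> interval_families (Suc (card C'))" "\<Union>F = UNIV"
      "\<forall>I\<in>F. \<forall>a\<in>I. \<forall>b\<in>I. \<forall>z. a < z \<and> z < b \<longrightarrow> z \<notin> C'"
      using partition_exists[OF fC'] by blast
    have FK: "F \<in> interval_families K" using F(1) cC' False by simp
    have fF: "finite F" and dis: "\<forall>I\<in>F. \<forall>J\<in>F. I \<noteq> J \<longrightarrow> I \<inter> J = {}"
      and meas: "\<forall>I\<in>F. I \<in> sets borel"
      using FK unfolding interval_families_def by (auto intro: real_interval_borel_measurable)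
    have "S F = (\<Sum>I\<in>F. set_lebesgue_integral lborel I (\<lambda>x. \<bar>g x\<bar>))"
      unfolding S_def
    proof (intro sum.cong refl)
      fix I assume I: "I \<in> F"
      have nz: "(\<forall>x. g x = 0) \<or> (\<forall>a\<in>I. \<forall>b\<in>I. \<forall>z. a < z \<and> z < b \<longrightarrow> g z \<noteq> 0)"
        using zC F(3) I unfolding C'_def by blast
      show "\<bar>LINT x:I|lborel. g x\<bar> = set_lebesgue_integral lborel I (\<lambda>x. \<bar>g x\<bar>)"
        using sign_setint[OF gi gc _ nz] meas I by simp
    qed
    also have "\<dots> = (\<integral>x. (\<Sum>I\<in>F. indicator I x) * \<bar>g x\<bar> \<partial>lborel)"
      by (rule si_sum[OF gi fF meas])
    also have "\<dots> = (\<integral>x. \<bar>g x\<bar> \<partial>lborel)"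
    proof (intro Bochner_Integration.integral_cong refl)
      fix x
      have "(\<Sum>I\<in>F. indicator I x :: real) = 1" using indicator_sum_le(2)[OF fF dis] F(2) by blast
      then show "(\<Sum>I\<in>F. indicator I x) * \<bar>g x\<bar> = \<bar>g x\<bar>" by simp
    qed
    finally show ?thesis using FK unfolding L1_norm_def by blast
  qed
  have "AK_norm K g = L1_norm g"
    unfolding AK_norm_def
  proof (rule cSup_eq_maximum)
    show "L1_norm g \<in> (\<lambda>F. \<Sum>I\<in>F. \<bar>LINT x:I|lborel. g x\<bar>) ` interval_families K"
    proof -
      from att obtain F where "F \<in> interval_families K" "S F = L1_norm g" by blast
      then show ?thesis unfolding S_def by (metis (no_types, lifting) rev_image_eqI)
    qed
    show "x \<le> L1_norm g" if "x \<in> (\<lambda>F. \<Sum>I\<in>F. \<bar>LINT x:I|lborel. g x\<bar>) ` interval_families K" for x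
      using that up unfolding S_def by auto
  qed
  then show ?thesis unfolding g_def .
qed

end
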